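(* Let $(B,\omega)$ be a finite rank, perfectly ordered, well-telescoped Bratteli diagram, with associated bijection $\sigma:\widetilde V\to\overline V$, and let $\mathcal H$ be its associated graph. (1) If $B$ is simple, then $\mathcal H$ is strongly connected. (2) If $B$ belongs to the class $\mathcal A$, then $\mathcal H$ is weakly connected (for any two vertices $t,t'$ there is a directed path from $t$ to $t'$ or from $t'$ to $t$).
   Context: A Bratteli diagram $B$ has levels $V_n$ ($V_0=\{v_0\}$) and edge sets $E_n$ from $V_{n-1}$ to $V_n$ with source/range maps $s,r$; $X_B$ is its path space; standing assumption: $B$ aperiodic. Incidence matrix $F_n=(f^{(n)}_{v,w})_{v\in V_{n+1},w\in V_n}$: number of edges from $w$ to $v$. $B$ is simple if for every $n$ there is $m>n$ with every vertex of $V_n$ connected by a path to every vertex of $V_m$. An ordering $\omega$ is a linear order on each $r^{-1}(v)$; maximal/minimal paths, Vershik map $\varphi_\omega$ and perfectness are as usual (a perfect ordering is one admitting a Vershik map, i.e. a homeomorphism extending the successor map and sending maximal paths onto minimal paths). When $V_n=V$ for all $n\ge1$, $w(v,m,n)$ ($v\in V_n$, $1\le m<n$) is the word of sources (in $V$) of the paths from level $m$ to $v$ listed in increasing lexicographic order. A path is vertical if it passes through the same vertex at every level $\ge1$. A perfectly ordered finite rank diagram $(B,\omega)$ of rank $d$ is well-telescoped if: (i) $|r^{-1}(v)|\ge2$ for all $v\ne v_0$; (ii) $V_n=V$ for all $n\ge1$ with $|V|=d$; (iii) all $\omega$-maximal and $\omega$-minimal paths are vertical; $\widetilde V$ ($\overline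 V$) denotes the set of vertices through which the maximal (minimal) paths pass and $M_{\tilde v}$ ($m_{\bar v}$) the maximal (minimal) path through $\tilde v\in\widetilde V$ ($\bar v\in\overline V$); (iv) for each $w\in V$ there are $\tilde v(w)\in\widetilde V$, $\bar v(w)\in\overline V$ such that for every $n\ge2$ the maximal edge of $r^{-1}(w)$, $w\in V_n$, has source $\tilde v(w)$ and the minimal edge has source $\bar v(w)$; (v) with $\sigma:\widetilde V\to\overline V$ the bijection defined by $\varphi_\omega(M_{\tilde v})=m_{\sigma(\tilde v)}$, whenever a word $\tilde v\bar v$ with $\tilde v\in\widetilde V$, $\bar v\in\overline V$ occurs as a subword of some $w(u,m,n)$ with $n>m\ge1$, then $\bar v=\sigma(\tilde v)$. Associated graph: $W_{\tilde v}=\{w\in V:\tilde v(w)=\tilde v\}$, $W'_{\bar v}=\{w\in V:\bar v(w)=\bar v\}$, $[\bar v,\tilde v]=W'_{\bar v}\cap W_{\tilde v}$. $\mathcal H$ is the directed graph with vertex set $\{[\bar v,\tilde v]:[\bar v,\tilde v]\ne\emptyset\}$ and a directed edge from $[\bar v,\tilde v]$ to $[\bar v_1,\tilde v_1]$ iff $\sigma(\tilde v)=\bar v_1$ (loops allowed). Class $\mathcal A$: diagrams with, for all $n\ge1$, $F_n$ of block lower-triangular form with diagonal blocks $A^{(1)}_n,\dots,A^{(k)}_n,C_n$ and last block row $(B^{(1)}_n,\dots,B^{(k)}_n,C_n)$, all other blocks zero, where each $A^{(i)}_n$ is $d_i\times d_i$ with $d_i$ independent of $n$, $C_n$ has size independent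 of $n$, all $A^{(i)}_n,B^{(i)}_n,C_n$ are strictly positive, and some fixed row in the last block row is strictly positive for every $n$; such a diagram is said to have $k$ minimal components. *)

theory Defs
  imports Main
begin

text \<open>A Bratteli diagram: vertex sets V n (level n), edge sets E n (n \<ge> 1) from level n-1
  to level n, with source and range maps depending on the level.\<close>

record ('v, 'e) bdiag =
  bV    :: "nat \<Rightarrow> 'v set"
  bE    :: "nat \<Rightarrow> 'e set"
  bsrc  :: "nat \<Rightarrow> 'e \<Rightarrow> 'v"
  brng  :: "nat \<Rightarrow> 'e \<Rightarrow> 'v"
  broot :: 'v

definition bratteli :: "('v, 'e) bdiag \<Rightarrow> bool" where
  "bratteli B \<longleftrightarrow>
     bV B 0 = {broot B} \<and>
     (\<forall>n. finite (bV B n) \<and> bV B n \<noteq> {}) \<and>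
     (\<forall>n\<ge>1. finite (bE B n) \<and>
        (\<forall>e\<in>bE B n. bsrc B n e \<in> bV B (n - 1) \<and> brng B n e \<in> bV B n) \<and>
        (\<forall>v\<in>bV B n. \<exists>e\<in>bE B n. brng B n e = v)) \<and>
     (\<forall>n. \<forall>v\<in>bV B n. \<exists>e\<in>bE B (Suc n). bsrc B (Suc n) e = v)"

definition redges :: "('v, 'e) bdiag \<Rightarrow> nat \<Rightarrow> 'v \<Rightarrow> 'e set" where
  "redges B n v = {e \<in> bE B n. brng B n e = v}"

text \<open>Number of edges from w (level n) to v (level n+1): the entry f^(n)_{v,w}.\<close>
definition nedges :: "('v, 'e) bdiag \<Rightarrow> nat \<Rightarrow> 'v \<Rightarrow> 'v \<Rightarrow> nat" where
  "nedges B n w v = card {e \<in> bE B (Suc n). bsrc B (Suc n) e = w \<and> brng B (Suc n) e = v}"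

text \<open>Path space X_B: x i is the edge at level i+1.\<close>
definition paths :: "('v, 'e) bdiag \<Rightarrow> (nat \<Rightarrow> 'e) set" where
  "paths B = {x. \<forall>i. x i \<in> bE B (Suc i) \<and>
                       brng B (Suc i) (x i) = bsrc B (Suc (Suc i)) (x (Suc i))}"

text \<open>Finite path from level m to the vertex u at level n (m < n): p i is the edge
  at level i for m < i \<le> n.\<close>
definition fpath :: "('v, 'e) bdiag \<Rightarrow> nat \<Rightarrow> nat \<Rightarrow> 'v \<Rightarrow> (nat \<Rightarrow> 'e) \<Rightarrow> bool" where
  "fpath B m n u p \<longleftrightarrow> m < n \<and>
     (\<forall>i. m < i \<and> i \<le> n \<longrightarrow> p i \<in> bE B i) \<and>
     (\<forall>i. m < i \<and> i < n \<longrightarrow> brng B i (p i) = bsrc B (Suc i) (p (Suc i))) \<and>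
     brng B n (p n) = u"

definition fsrc :: "('v, 'e) bdiag \<Rightarrow> nat \<Rightarrow> (nat \<Rightarrow> 'e) \<Rightarrow> 'v" where
  "fsrc B m p = bsrc B (Suc m) (p (Suc m))"

definition simple :: "('v, 'e) bdiag \<Rightarrow> bool" where
  "simple B \<longleftrightarrow> (\<forall>n. \<exists>m>n. \<forall>v\<in>bV B n. \<forall>w\<in>bV B m.
      \<exists>p. fpath B n m w p \<and> fsrc B n p = v)"

definition aperiodic :: "('v, 'e) bdiag \<Rightarrow> bool" where
  "aperiodic B \<longleftrightarrow> (\<forall>x\<in>paths B.
      infinite {y\<in>paths B. \<exists>N. \<forall>i\<ge>N. y i = x i})"

definition bordering :: "('v, 'e) bdiag \<Rightarrow> (nat \<Rightarrow> ('e \<times> 'e) set) \<Rightarrow> bool" where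
  "bordering B \<omega> \<longleftrightarrow> (\<forall>n\<ge>1.
      \<omega> n \<subseteq> {(e, e'). e \<in> bE B n \<and> e' \<in> bE B n \<and> brng B n e = brng B n e'} \<and>
      (\<forall>v\<in>bV B n. linear_order_on (redges B n v) (\<omega> n \<inter> (redges B n v \<times> redges B n v))))"

definition maxedge :: "('v, 'e) bdiag \<Rightarrow> (nat \<Rightarrow> ('e \<times> 'e) set) \<Rightarrow> nat \<Rightarrow> 'e \<Rightarrow> bool" where
  "maxedge B \<omega> n e \<longleftrightarrow> e \<in> bE B n \<and>
     (\<forall>e'\<in>bE B n. brng B n e' = brng B n e \<longrightarrow> (e', e) \<in> \<omega> n)"

definition minedge :: "('v, 'e) bdiag \<Rightarrow> (nat \<Rightarrow> ('e \<times> 'e) set) \<Rightarrow> nat \<Rightarrow> 'e \<Rightarrow> bool" where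
  "minedge B \<omega> n e \<longleftrightarrow> e \<in> bE B n \<and>
     (\<forall>e'\<in>bE B n. brng B n e' = brng B n e \<longrightarrow> (e, e') \<in> \<omega> n)"

definition nextedge :: "('v, 'e) bdiag \<Rightarrow> (nat \<Rightarrow> ('e \<times> 'e) set) \<Rightarrow> nat \<Rightarrow> 'e \<Rightarrow> 'e \<Rightarrow> bool" where
  "nextedge B \<omega> n e e' \<longleftrightarrow> e \<in> bE B n \<and> e' \<in> bE B n \<and> brng B n e = brng B n e' \<and>
     (e, e') \<in> \<omega> n \<and> e \<noteq> e' \<and>
     \<not> (\<exists>e''. (e, e'') \<in> \<omega> n \<and> (e'', e') \<in> \<omega> n \<and> e'' \<noteq> e \<and> e'' \<noteq> e')"

definition Xmax :: "('v, 'e) bdiag \<Rightarrow> (nat \<Rightarrow> ('e \<times> 'e) set) \<Rightarrow> (nat \<Rightarrow> 'e) set" where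
  "Xmax B \<omega> = {x \<in> paths B. \<forall>i. maxedge B \<omega> (Suc i) (x i)}"

definition Xmin :: "('v, 'e) bdiag \<Rightarrow> (nat \<Rightarrow> ('e \<times> 'e) set) \<Rightarrow> (nat \<Rightarrow> 'e) set" where
  "Xmin B \<omega> = {x \<in> paths B. \<forall>i. minedge B \<omega> (Suc i) (x i)}"

definition is_succ :: "('v, 'e) bdiag \<Rightarrow> (nat \<Rightarrow> ('e \<times> 'e) set) \<Rightarrow> (nat \<Rightarrow> 'e) \<Rightarrow> (nat \<Rightarrow> 'e) \<Rightarrow> bool" where
  "is_succ B \<omega> x y \<longleftrightarrow> y \<in> paths B \<and> (\<exists>k.
      (\<forall>i<k. maxedge B \<omega> (Suc i) (x i)) \<and>
      nextedge B \<omega> (Suc k) (x k) (y k) \<and>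
      (\<forall>i>k. y i = x i) \<and>
      (\<forall>i<k. minedge B \<omega> (Suc i) (y i)))"

text \<open>Continuity on a subset of the path space w.r.t. the product of discrete topologies.\<close>
definition pcont_on :: "(nat \<Rightarrow> 'e) set \<Rightarrow> ((nat \<Rightarrow> 'e) \<Rightarrow> (nat \<Rightarrow> 'e)) \<Rightarrow> bool" where
  "pcont_on X f \<longleftrightarrow> (\<forall>x\<in>X. \<forall>n. \<exists>m. \<forall>y\<in>X.
      (\<forall>i<m. y i = x i) \<longrightarrow> (\<forall>i<n. f y i = f x i))"

definition phomeo :: "(nat \<Rightarrow> 'e) set \<Rightarrow> ((nat \<Rightarrow> 'e) \<Rightarrow> (nat \<Rightarrow> 'e)) \<Rightarrow> bool" where
  "phomeo X f \<longleftrightarrow> bij_betw f X X \<and> pcont_on X f \<and> pcont_on X (the_inv_into X f)"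

definition vershik_map :: "('v, 'e) bdiag \<Rightarrow> (nat \<Rightarrow> ('e \<times> 'e) set) \<Rightarrow> ((nat \<Rightarrow> 'e) \<Rightarrow> (nat \<Rightarrow> 'e)) \<Rightarrow> bool" where
  "vershik_map B \<omega> \<phi> \<longleftrightarrow> phomeo (paths B) \<phi> \<and>
     (\<forall>x \<in> paths B - Xmax B \<omega>. is_succ B \<omega> x (\<phi> x)) \<and>
     \<phi> ` Xmax B \<omega> = Xmin B \<omega>"

definition perfect :: "('v, 'e) bdiag \<Rightarrow> (nat \<Rightarrow> ('e \<times> 'e) set) \<Rightarrow> bool" where
  "perfect B \<omega> \<longleftrightarrow> (\<exists>\<phi>. vershik_map B \<omega> \<phi>)"

definition vertical_through :: "('v, 'e) bdiag \<Rightarrow> (nat \<Rightarrow> 'e) \<Rightarrow> 'v \<Rightarrow> bool" where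
  "vertical_through B x v \<longleftrightarrow> (\<forall>i. brng B (Suc i) (x i) = v)"

definition Vtil :: "('v, 'e) bdiag \<Rightarrow> (nat \<Rightarrow> ('e \<times> 'e) set) \<Rightarrow> 'v set" where
  "Vtil B \<omega> = {v. \<exists>x\<in>Xmax B \<omega>. vertical_through B x v}"

definition Vbar :: "('v, 'e) bdiag \<Rightarrow> (nat \<Rightarrow> ('e \<times> 'e) set) \<Rightarrow> 'v set" where
  "Vbar B \<omega> = {v. \<exists>x\<in>Xmin B \<omega>. vertical_through B x v}"

definition assoc_sigma :: "('v, 'e) bdiag \<Rightarrow> (nat \<Rightarrow> ('e \<times> 'e) set) \<Rightarrow>
    ((nat \<Rightarrow> 'e) \<Rightarrow> (nat \<Rightarrow> 'e)) \<Rightarrow> ('v \<Rightarrow> 'v) \<Rightarrow> bool" where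
  "assoc_sigma B \<omega> \<phi> \<sigma> \<longleftrightarrow> (\<forall>v\<in>Vtil B \<omega>. \<forall>x\<in>Xmax B \<omega>. vertical_through B x v \<longrightarrow>
      \<phi> x \<in> Xmin B \<omega> \<and> vertical_through B (\<phi> x) (\<sigma> v))"

text \<open>Strict lexicographic order on finite paths from level m to a vertex at level n
  (compare at the highest level where the paths differ).\<close>
definition lexless :: "(nat \<Rightarrow> ('e \<times> 'e) set) \<Rightarrow> nat \<Rightarrow> nat \<Rightarrow> (nat \<Rightarrow> 'e) \<Rightarrow> (nat \<Rightarrow> 'e) \<Rightarrow> bool" where
  "lexless \<omega> m n p q \<longleftrightarrow> (\<exists>k. m < k \<and> k \<le> n \<and> (p k, q k) \<in> \<omega> k \<and> p k \<noteq> q k \<and>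
      (\<forall>i. k < i \<and> i \<le> n \<longrightarrow> p i = q i))"

text \<open>q immediately follows p in the list of paths from level m to u (level n); the word
  w(u,m,n) has the subword (fsrc p)(fsrc q) exactly for such consecutive pairs.\<close>
definition consecutive :: "('v, 'e) bdiag \<Rightarrow> (nat \<Rightarrow> ('e \<times> 'e) set) \<Rightarrow> nat \<Rightarrow> nat \<Rightarrow> 'v \<Rightarrow>
    (nat \<Rightarrow> 'e) \<Rightarrow> (nat \<Rightarrow> 'e) \<Rightarrow> bool" where
  "consecutive B \<omega> m n u p q \<longleftrightarrow> fpath B m n u p \<and> fpath B m n u q \<and> lexless \<omega> m n p q \<and>
      \<not> (\<exists>r. fpath B m n u r \<and> lexless \<omega> m n p r \<and> lexless \<omega> m n r q)"

text \<open>Well-telescoped with common vertex set VV, maps tv = \<tilde>v(.), bv = \<bar>v(.) of (iv)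
  and associated bijection sigma of (v).\<close>
definition well_telescoped :: "('v, 'e) bdiag \<Rightarrow> (nat \<Rightarrow> ('e \<times> 'e) set) \<Rightarrow> 'v set \<Rightarrow>
    ('v \<Rightarrow> 'v) \<Rightarrow> ('v \<Rightarrow> 'v) \<Rightarrow> ('v \<Rightarrow> 'v) \<Rightarrow> bool" where
  "well_telescoped B \<omega> VV tv bv \<sigma> \<longleftrightarrow>
     (\<forall>n\<ge>1. \<forall>v\<in>bV B n. card (redges B n v) \<ge> 2) \<and>
     (\<forall>n\<ge>1. bV B n = VV) \<and>
     (\<forall>x\<in>Xmax B \<omega>. \<exists>v. vertical_through B x v) \<and>
     (\<forall>x\<in>Xmin B \<omega>. \<exists>v. vertical_through B x v) \<and>
     (\<forall>w\<in>VV. tv w \<in> Vtil B \<omega> \<and> bv w \<in> Vbar B \<omega> \<and>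
        (\<forall>n\<ge>2. \<forall>e\<in>redges B n w.
           (maxedge B \<omega> n e \<longrightarrow> bsrc B n e = tv w) \<and>
           (minedge B \<omega> n e \<longrightarrow> bsrc B n e = bv w))) \<and>
     (\<forall>m n u p q. 1 \<le> m \<and> m < n \<and> u \<in> VV \<and> consecutive B \<omega> m n u p q \<and>
        fsrc B m p \<in> Vtil B \<omega> \<and> fsrc B m q \<in> Vbar B \<omega> \<longrightarrow>
        fsrc B m q = \<sigma> (fsrc B m p))"

definition Hverts :: "'v set \<Rightarrow> 'v set \<Rightarrow> 'v set \<Rightarrow> ('v \<Rightarrow> 'v) \<Rightarrow> ('v \<Rightarrow> 'v) \<Rightarrow> ('v \<times> 'v) set" where
  "Hverts VV Vt Vb tv bv =
     {(b, t). b \<in> Vb \<and> t \<in> Vt \<and> {w \<in> VV. bv w = b \<and> tv w = t} \<noteq> {}}"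

definition Hedges :: "('v \<times> 'v) set \<Rightarrow> ('v \<Rightarrow> 'v) \<Rightarrow> (('v \<times> 'v) \<times> ('v \<times> 'v)) set" where
  "Hedges H \<sigma> = {((b, t), (b1, t1)). (b, t) \<in> H \<and> (b1, t1) \<in> H \<and> \<sigma> t = b1}"

definition strongly_connected :: "'a set \<Rightarrow> ('a \<times> 'a) set \<Rightarrow> bool" where
  "strongly_connected N R \<longleftrightarrow> (\<forall>t\<in>N. \<forall>t'\<in>N. (t, t') \<in> R\<^sup>*)"

definition weakly_connected :: "'a set \<Rightarrow> ('a \<times> 'a) set \<Rightarrow> bool" where
  "weakly_connected N R \<longleftrightarrow> (\<forall>t\<in>N. \<forall>t'\<in>N. (t, t') \<in> R\<^sup>* \<or> (t', t) \<in> R\<^sup>*)"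

text \<open>lab n v \<in> {1..k+1} is the block of vertex v at level n (block k+1 = the C block).
  F_n (rows V_{n+1}, columns V_n) is block lower triangular with strictly positive
  diagonal blocks A^(i)_n, C_n, strictly positive last block row, zeros elsewhere.\<close>
definition classA :: "('v, 'e) bdiag \<Rightarrow> bool" where
  "classA B \<longleftrightarrow> (\<exists>k c d lab. 1 \<le> k \<and> 1 \<le> c \<and> (\<forall>i\<in>{1..k}. 1 \<le> (d i :: nat)) \<and>
     (\<forall>n\<ge>1.
        (\<forall>v\<in>bV B n. lab n v \<in> {1..Suc k}) \<and>
        (\<forall>i\<in>{1..k}. card {v\<in>bV B n. lab n v = i} = d i) \<and>
        card {v\<in>bV B n. lab n v = Suc k} = c \<and>
        (\<forall>w\<in>bV B n. \<forall>v\<in>bV B (Suc n).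
           (lab (Suc n) v = Suc k \<longrightarrow> nedges B n w v > 0) \<and>
           (lab (Suc n) v \<noteq> Suc k \<longrightarrow> (nedges B n w v > 0 \<longleftrightarrow> lab n w = lab (Suc n) v)))))"

end

theory Submission
  imports Defs
begin


lemma lo_facts:
  assumes "linear_order_on S r"
  shows "r \<subseteq> S \<times> S" "\<And>x. x \<in> S \<Longrightarrow> (x,x) \<in> r"
    "\<And>x y z. (x,y) \<in> r \<Longrightarrow> (y,z) \<in> r \<Longrightarrow> (x,z) \<in> r"
    "\<And>x y. (x,y) \<in> r \<Longrightarrow> (y,x) \<in> r \<Longrightarrow> x = y"
    "\<And>x y. x \<in> S \<Longrightarrow> y \<in> S \<Longrightarrow> x \<noteq> y \<Longrightarrow> (x,y) \<in> r \<or> (y,x) \<in> r"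
  using assms unfolding linear_order_on_def partial_order_on_def preorder_on_def
    refl_on_def total_on_def antisym_on_def trans_on_def by blast+

lemma lin_max:
  assumes lo: "linear_order_on S r" and "finite A" "A \<noteq> {}" "A \<subseteq> S"
  shows "\<exists>x\<in>A. \<forall>y\<in>A. (y,x) \<in> r"
  using assms(2,3,4)
proof (induction A rule: finite_ne_induct)
  case (singleton x) then show ?case using lo_facts[OF lo] by auto
next
  case (insert a F)
  then obtain m where m: "m\<in>F" "\<forall>y\<in>F. (y,m)\<in>r" by auto
  have aS: "a \<in> S" and mS: "m \<in> S" using insert m by auto
  show ?case
  proof (cases "(m,a) \<in> r")
    case True then show ?thesis using m lo_facts(2,3)[OF lo] aS by blast
  next
    case False
    then have "(a,m) \<in> r" using lo_facts(2,5)[OF lo] aS mS by blast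
    then show ?thesis using m lo_facts(2,3)[OF lo] by blast
  qed
qed

lemma lin_min:
  assumes lo: "linear_order_on S r" and "finite A" "A \<noteq> {}" "A \<subseteq> S"
  shows "\<exists>x\<in>A. \<forall>y\<in>A. (x,y) \<in> r"
  using assms(2,3,4)
proof (induction A rule: finite_ne_induct)
  case (singleton x) then show ?case using lo_facts[OF lo] by auto
next
  case (insert a F)
  then obtain m where m: "m\<in>F" "\<forall>y\<in>F. (m,y)\<in>r" by auto
  have aS: "a \<in> S" and mS: "m \<in> S" using insert m by auto
  show ?case
  proof (cases "(a,m) \<in> r")
    case True then show ?thesis using m lo_facts(2,3)[OF lo] aS by blast
  next
    case False
    then have "(m,a) \<in> r" using lo_facts(2,5)[OF lo] aS mS by blast
    then show ?thesis using m lo_facts(2,3)[OF lo] by blast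
  qed
qed

lemma lin_next:
  assumes lo: "linear_order_on S r" and fin: "finite S" and ab: "(a,b) \<in> r" "a \<noteq> b"
  shows "\<exists>c. (a,c)\<in>r \<and> c\<noteq>a \<and> (c,b)\<in>r \<and>
     \<not> (\<exists>z. (a,z)\<in>r \<and> (z,c)\<in>r \<and> z\<noteq>a \<and> z\<noteq>c)"
proof -
  note F = lo_facts[OF lo]
  define I where "I = {z\<in>S. (a,z)\<in>r \<and> z\<noteq>a \<and> (z,b)\<in>r}"
  have bI: "b \<in> I" using ab F(1,2) unfolding I_def by blast
  have "finite I" "I \<subseteq> S" using fin unfolding I_def by auto
  then obtain c where c: "c \<in> I" "\<forall>y\<in>I. (c,y)\<in>r" using lin_min[OF lo] bI by blast
  have "\<not> (\<exists>z. (a,z)\<in>r \<and> (z,c)\<in>r \<and> z\<noteq>a \<and> z\<noteq>c)"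
  proof
    assume "\<exists>z. (a,z)\<in>r \<and> (z,c)\<in>r \<and> z\<noteq>a \<and> z\<noteq>c"
    then obtain z where z: "(a,z)\<in>r" "(z,c)\<in>r" "z\<noteq>a" "z\<noteq>c" by blast
    have "z \<in> I" using z c F(1,3) unfolding I_def by blast
    then have "(c,z) \<in> r" using c by blast
    then show False using z F(4) by blast
  qed
  then show ?thesis using c unfolding I_def by blast
qed

lemma lin_chain:
  assumes lo: "linear_order_on S r" and fin: "finite S"
    and step: "\<And>x y. (x,y)\<in>r \<Longrightarrow> x\<noteq>y \<Longrightarrow> \<not> (\<exists>z. (x,z)\<in>r \<and> (z,y)\<in>r \<and> z\<noteq>x \<and> z\<noteq>y)
        \<Longrightarrow> (g x, g y) \<in> R\<^sup>*"
  shows "(a,b)\<in>r \<Longrightarrow> (g a, g b) \<in> R\<^sup>*"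
proof (induction "card {z. (a,z)\<in>r \<and> (z,b)\<in>r}" arbitrary: a rule: less_induct)
  case less
  note F = lo_facts[OF lo]
  show ?case
  proof (cases "a = b")
    case True then show ?thesis by simp
  next
    case False
    obtain c where c: "(a,c)\<in>r" "c\<noteq>a" "(c,b)\<in>r"
      and nx: "\<not> (\<exists>z. (a,z)\<in>r \<and> (z,c)\<in>r \<and> z\<noteq>a \<and> z\<noteq>c)"
      using lin_next[OF lo fin less.prems False] by blast
    have ac: "(g a, g c) \<in> R\<^sup>*" using step c nx by blast
    have fr: "finite {z. (a,z)\<in>r \<and> (z,b)\<in>r}"
      by (rule finite_subset[OF _ fin]) (use F(1) in blast)
    have sub: "{z. (c,z)\<in>r \<and> (z,b)\<in>r} \<subset> {z. (a,z)\<in>r \<and> (z,b)\<in>r}"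
    proof
      show "{z. (c,z)\<in>r \<and> (z,b)\<in>r} \<subseteq> {z. (a,z)\<in>r \<and> (z,b)\<in>r}" using c F(3) by blast
      have "a \<in> S" using c F(1) by blast
      then have "a \<in> {z. (a,z)\<in>r \<and> (z,b)\<in>r}" using less.prems F(2) by blast
      moreover have "a \<notin> {z. (c,z)\<in>r \<and> (z,b)\<in>r}" using c F(4) by blast
      ultimately show "{z. (c,z)\<in>r \<and> (z,b)\<in>r} \<noteq> {z. (a,z)\<in>r \<and> (z,b)\<in>r}" by blast
    qed
    have "(g c, g b) \<in> R\<^sup>*"
      using less.hyps[OF psubset_card_mono[OF fr sub]] c(3) by blast
    then show ?thesis using ac by simp
  qed
qed



locale WT =
  fixes B :: "('v, 'e) bdiag" and \<omega> :: "nat \<Rightarrow> ('e \<times> 'e) set"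
    and VV :: "'v set" and tv bv \<sigma> :: "'v \<Rightarrow> 'v"
  assumes br: "bratteli B" and bo: "bordering B \<omega>"
    and wt: "well_telescoped B \<omega> VV tv bv \<sigma>"
begin

lemma lev: "1 \<le> n \<Longrightarrow> bV B n = VV"
  using wt unfolding well_telescoped_def by blast

lemma rng_VV: "1 \<le> n \<Longrightarrow> e \<in> bE B n \<Longrightarrow> brng B n e \<in> VV"
  using br lev unfolding bratteli_def by blast

lemma src_VV: "2 \<le> n \<Longrightarrow> e \<in> bE B n \<Longrightarrow> bsrc B n e \<in> VV"
proof -
  assume a: "2 \<le> n" "e \<in> bE B n"
  then have "bsrc B n e \<in> bV B (n - 1)" using br unfolding bratteli_def by auto
  then show ?thesis using lev[of "n - 1"] a by auto
qed

lemma red_fin: "1 \<le> n \<Longrightarrow> finite (redges B n u)"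
  using br unfolding bratteli_def redges_def by auto

lemma red_ne: "1 \<le> n \<Longrightarrow> u \<in> VV \<Longrightarrow> redges B n u \<noteq> {}"
  using br lev unfolding bratteli_def redges_def by blast

lemma lo: "1 \<le> n \<Longrightarrow> u \<in> VV \<Longrightarrow>
   linear_order_on (redges B n u) (\<omega> n \<inter> (redges B n u \<times> redges B n u))"
  using bo lev unfolding bordering_def by blast

lemma om_sub: "1 \<le> n \<Longrightarrow> (a,b) \<in> \<omega> n \<Longrightarrow> a \<in> bE B n \<and> b \<in> bE B n \<and> brng B n a = brng B n b"
  using bo unfolding bordering_def by blast

lemma antis: "1 \<le> n \<Longrightarrow> u \<in> VV \<Longrightarrow> a \<in> redges B n u \<Longrightarrow> b \<in> redges B n u \<Longrightarrow>
   (a,b) \<in> \<omega> n \<Longrightarrow> (b,a) \<in> \<omega> n \<Longrightarrow> a = b"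
  using lo_facts(4)[OF lo] by blast

lemma max_ex: assumes "1 \<le> n" "u \<in> VV" shows "\<exists>e\<in>redges B n u. maxedge B \<omega> n e"
proof -
  obtain e where e: "e \<in> redges B n u" "\<forall>y\<in>redges B n u. (y,e) \<in> \<omega> n \<inter> (redges B n u \<times> redges B n u)"
    using lin_max[OF lo[OF assms] red_fin[OF assms(1)] red_ne[OF assms]] by blast
  then show ?thesis unfolding maxedge_def redges_def by auto
qed

lemma min_ex: assumes "1 \<le> n" "u \<in> VV" shows "\<exists>e\<in>redges B n u. minedge B \<omega> n e"
proof -
  obtain e where e: "e \<in> redges B n u" "\<forall>y\<in>redges B n u. (e,y) \<in> \<omega> n \<inter> (redges B n u \<times> redges B n u)"
    using lin_min[OF lo[OF assms] red_fin[OF assms(1)] red_ne[OF assms]] by blast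
  then show ?thesis unfolding minedge_def redges_def by auto
qed

lemma tv_src: "2 \<le> n \<Longrightarrow> u \<in> VV \<Longrightarrow> e \<in> redges B n u \<Longrightarrow> maxedge B \<omega> n e \<Longrightarrow> bsrc B n e = tv u"
  using wt unfolding well_telescoped_def by blast

lemma bv_src: "2 \<le> n \<Longrightarrow> u \<in> VV \<Longrightarrow> e \<in> redges B n u \<Longrightarrow> minedge B \<omega> n e \<Longrightarrow> bsrc B n e = bv u"
  using wt unfolding well_telescoped_def by blast

lemma tv_in: "u \<in> VV \<Longrightarrow> tv u \<in> Vtil B \<omega>"
  using wt unfolding well_telescoped_def by blast

lemma bv_in: "u \<in> VV \<Longrightarrow> bv u \<in> Vbar B \<omega>"
  using wt unfolding well_telescoped_def by blast

lemma Vtil_fix: assumes "t \<in> Vtil B \<omega>" shows "t \<in> VV" "tv t = t"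
proof -
  obtain x where x: "x \<in> Xmax B \<omega>" "vertical_through B x t" using assms unfolding Vtil_def by blast
  have p: "x \<in> paths B" and mx: "\<forall>i. maxedge B \<omega> (Suc i) (x i)" using x unfolding Xmax_def by auto
  have r: "\<forall>i. brng B (Suc i) (x i) = t" using x unfolding vertical_through_def by blast
  have pp: "\<forall>i. x i \<in> bE B (Suc i) \<and> brng B (Suc i) (x i) = bsrc B (Suc (Suc i)) (x (Suc i))"
    using p unfolding paths_def by blast
  have e0: "x 0 \<in> bE B (Suc 0)" using pp by blast
  have e1: "x (Suc 0) \<in> bE B (Suc (Suc 0))" using pp by blast
  have s1: "brng B (Suc 0) (x 0) = bsrc B (Suc (Suc 0)) (x (Suc 0))" using pp by blast
  have r0: "brng B (Suc 0) (x 0) = t" using r by blast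
  have r1: "brng B (Suc (Suc 0)) (x (Suc 0)) = t" using r by blast
  show tV: "t \<in> VV" using rng_VV[OF _ e0] r0 by simp
  have a: "x (Suc 0) \<in> redges B (Suc (Suc 0)) t" using e1 r1 unfolding redges_def by simp
  have b: "maxedge B \<omega> (Suc (Suc 0)) (x (Suc 0))" using mx by blast
  have "bsrc B (Suc (Suc 0)) (x (Suc 0)) = tv t" by (rule tv_src[OF _ tV a b]) simp
  then show "tv t = t" using s1 r0 by simp
qed

lemma Vbar_fix: assumes "t \<in> Vbar B \<omega>" shows "t \<in> VV" "bv t = t"
proof -
  obtain x where x: "x \<in> Xmin B \<omega>" "vertical_through B x t" using assms unfolding Vbar_def by blast
  have p: "x \<in> paths B" and mx: "\<forall>i. minedge B \<omega> (Suc i) (x i)" using x unfolding Xmin_def by auto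
  have r: "\<forall>i. brng B (Suc i) (x i) = t" using x unfolding vertical_through_def by blast
  have pp: "\<forall>i. x i \<in> bE B (Suc i) \<and> brng B (Suc i) (x i) = bsrc B (Suc (Suc i)) (x (Suc i))"
    using p unfolding paths_def by blast
  have e0: "x 0 \<in> bE B (Suc 0)" using pp by blast
  have e1: "x (Suc 0) \<in> bE B (Suc (Suc 0))" using pp by blast
  have s1: "brng B (Suc 0) (x 0) = bsrc B (Suc (Suc 0)) (x (Suc 0))" using pp by blast
  have r0: "brng B (Suc 0) (x 0) = t" using r by blast
  have r1: "brng B (Suc (Suc 0)) (x (Suc 0)) = t" using r by blast
  show tV: "t \<in> VV" using rng_VV[OF _ e0] r0 by simp
  have a: "x (Suc 0) \<in> redges B (Suc (Suc 0)) t" using e1 r1 unfolding redges_def by simp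
  have b: "minedge B \<omega> (Suc (Suc 0)) (x (Suc 0))" using mx by blast
  have "bsrc B (Suc (Suc 0)) (x (Suc 0)) = bv t" by (rule bv_src[OF _ tV a b]) simp
  then show "bv t = t" using s1 r0 by simp
qed

definition "H = Hverts VV (Vtil B \<omega>) (Vbar B \<omega>) tv bv"
definition "R = Hedges H \<sigma>"
definition "h x = (bv x, tv x)"

lemma hH: "x \<in> VV \<Longrightarrow> h x \<in> H"
  unfolding H_def Hverts_def h_def using tv_in bv_in by blast

lemma H_h: "z \<in> H \<Longrightarrow> \<exists>w\<in>VV. z = h w"
  unfolding H_def Hverts_def h_def by blast

lemma edgeE: "x \<in> VV \<Longrightarrow> y \<in> VV \<Longrightarrow> \<sigma> (tv x) = bv y \<Longrightarrow> (h x, h y) \<in> R"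
  using hH unfolding R_def Hedges_def by (auto simp: h_def)

lemma R_D: "(z, z') \<in> R \<Longrightarrow> z \<in> H \<and> z' \<in> H \<and> \<sigma> (snd z) = fst z'"
  unfolding R_def Hedges_def by auto

lemma transT: assumes "(h x, h t) \<in> R\<^sup>*" "t \<in> Vtil B \<omega>" "x \<in> VV"
  shows "(h (tv x), h t) \<in> R\<^sup>*"
  using assms(1)
proof (cases rule: converse_rtranclE)
  case base
  then have "tv x = t" using Vtil_fix[OF assms(2)] by (simp add: h_def)
  then show ?thesis using Vtil_fix[OF assms(2)] by simp
next
  case (step z)
  have tx: "tv x \<in> VV" "tv (tv x) = tv x" using Vtil_fix[OF tv_in[OF assms(3)]] by auto
  have "(h (tv x), z) \<in> R"
    using R_D[OF step(1)] hH[OF tx(1)] tx(2) unfolding R_def Hedges_def h_def by auto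
  then show ?thesis using step(2) by simp
qed

lemma transT': assumes "(h b, h y) \<in> R\<^sup>*" "b \<in> Vbar B \<omega>" "y \<in> VV"
  shows "(h b, h (bv y)) \<in> R\<^sup>*"
  using assms(1)
proof (cases rule: rtranclE)
  case base
  then have "bv y = b" using Vbar_fix[OF assms(2)] by (simp add: h_def)
  then show ?thesis by simp
next
  case (step z)
  have tx: "bv y \<in> VV" "bv (bv y) = bv y" using Vbar_fix[OF bv_in[OF assms(3)]] by auto
  have "(z, h (bv y)) \<in> R"
    using R_D[OF step(2)] hH[OF tx(1)] tx(2) unfolding R_def Hedges_def h_def by auto
  then show ?thesis using step(1) by simp
qed

lemma wt5: "1 \<le> m \<Longrightarrow> m < n \<Longrightarrow> u \<in> VV \<Longrightarrow> consecutive B \<omega> m n u p q \<Longrightarrow>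
   fsrc B m p \<in> Vtil B \<omega> \<Longrightarrow> fsrc B m q \<in> Vbar B \<omega> \<Longrightarrow> fsrc B m q = \<sigma> (fsrc B m p)"
  using wt unfolding well_telescoped_def by blast

lemma factA:
  assumes n3: "3 \<le> n" and uV: "u \<in> VV" and nx: "nextedge B \<omega> n e e'" and eu: "brng B n e = u"
  shows "\<sigma> (tv (bsrc B n e)) = bv (bsrc B n e')"
proof -
  define v where "v = bsrc B n e"
  define v' where "v' = bsrc B n e'"
  have eE: "e \<in> bE B n" and e'E: "e' \<in> bE B n" and e'u: "brng B n e' = u"
    and om: "(e, e') \<in> \<omega> n" and ne: "e \<noteq> e'"
    and nob: "\<not> (\<exists>e''. (e, e'') \<in> \<omega> n \<and> (e'', e') \<in> \<omega> n \<and> e'' \<noteq> e \<and> e'' \<noteq> e')"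
    using nx eu unfolding nextedge_def by auto
  have vV: "v \<in> VV" using src_VV[OF _ eE] n3 unfolding v_def by simp
  have v'V: "v' \<in> VV" using src_VV[OF _ e'E] n3 unfolding v'_def by simp
  have n1: "1 \<le> n - 1" using n3 by simp
  obtain pm where pm: "pm \<in> redges B (n-1) v" "maxedge B \<omega> (n-1) pm" using max_ex[OF n1 vV] by blast
  obtain qm where qm: "qm \<in> redges B (n-1) v'" "minedge B \<omega> (n-1) qm" using min_ex[OF n1 v'V] by blast
  define m where "m = n - 2"
  define p where "p = (\<lambda>i. if i = n then e else pm)"
  define q where "q = (\<lambda>i. if i = n then e' else qm)"
  have Sm: "Suc m = n - 1" and Sn: "Suc (n - 1) = n" and nn: "n - 1 \<noteq> n" and m1: "1 \<le> m" and mn: "m < n"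
    using n3 unfolding m_def by auto
  have ii: "\<And>i. m < i \<Longrightarrow> i \<le> n \<Longrightarrow> i = n - 1 \<or> i = n" using n3 unfolding m_def by arith
  have ii2: "\<And>i. m < i \<Longrightarrow> i < n \<Longrightarrow> i = n - 1" using n3 unfolding m_def by arith
  have pmE: "pm \<in> bE B (n-1)" "brng B (n-1) pm = v" using pm unfolding redges_def by auto
  have qmE: "qm \<in> bE B (n-1)" "brng B (n-1) qm = v'" using qm unfolding redges_def by auto
  have fp: "fpath B m n u p"
    unfolding fpath_def
  proof (intro conjI allI impI)
    show "m < n" by fact
    fix i assume "m < i \<and> i \<le> n" then show "p i \<in> bE B i"
      using ii[of i] pmE eE nn unfolding p_def by auto
  next
    fix i assume "m < i \<and> i < n" then have "i = n - 1" using ii2 by blast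
    then show "brng B i (p i) = bsrc B (Suc i) (p (Suc i))"
      using pmE nn Sn unfolding p_def v_def by simp
  next
    show "brng B n (p n) = u" using eu unfolding p_def by simp
  qed
  have fq: "fpath B m n u q"
    unfolding fpath_def
  proof (intro conjI allI impI)
    show "m < n" by fact
    fix i assume "m < i \<and> i \<le> n" then show "q i \<in> bE B i"
      using ii[of i] qmE e'E nn unfolding q_def by auto
  next
    fix i assume "m < i \<and> i < n" then have "i = n - 1" using ii2 by blast
    then show "brng B i (q i) = bsrc B (Suc i) (q (Suc i))"
      using qmE nn Sn unfolding q_def v'_def by simp
  next
    show "brng B n (q n) = u" using e'u unfolding q_def by simp
  qed
  have n2: "2 \<le> n - 1" using n3 by simp
  have fsp: "fsrc B m p = tv v"
    unfolding fsrc_def Sm using tv_src[OF n2 vV pm] nn unfolding p_def by simp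
  have fsq: "fsrc B m q = bv v'"
    unfolding fsrc_def Sm using bv_src[OF n2 v'V qm] nn unfolding q_def by simp
  have lex: "lexless \<omega> m n p q"
    unfolding lexless_def using mn om ne unfolding p_def q_def by auto
  have noR: "\<not> (\<exists>r. fpath B m n u r \<and> lexless \<omega> m n p r \<and> lexless \<omega> m n r q)"
  proof
    assume "\<exists>r. fpath B m n u r \<and> lexless \<omega> m n p r \<and> lexless \<omega> m n r q"
    then obtain r where r: "fpath B m n u r" "lexless \<omega> m n p r" "lexless \<omega> m n r q" by blast
    have mlt: "m < n - 1" "n - 1 < n" "n - 1 \<le> n" using n3 unfolding m_def by auto
    have rE: "r (n-1) \<in> bE B (n-1)" using r(1) mlt unfolding fpath_def by blast
    have rlink: "brng B (n-1) (r (n-1)) = bsrc B n (r n)"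
      using r(1) mlt Sn unfolding fpath_def by (metis)
    obtain k1 where k1: "m < k1" "k1 \<le> n" "(p k1, r k1) \<in> \<omega> k1" "p k1 \<noteq> r k1"
      "\<forall>i. k1 < i \<and> i \<le> n \<longrightarrow> p i = r i" using r(2) unfolding lexless_def by blast
    have k1n: "k1 = n"
    proof (rule ccontr)
      assume "k1 \<noteq> n"
      then have k: "k1 = n - 1" using ii k1 by blast
      have "r n = e" using k1(5) k mlt unfolding p_def by auto
      then have rv: "r (n-1) \<in> redges B (n-1) v" using rE rlink unfolding redges_def v_def by simp
      have a: "(pm, r (n-1)) \<in> \<omega> (n-1)" and b: "pm \<noteq> r (n-1)" using k1(3,4) k nn unfolding p_def by auto
      have "(r (n-1), pm) \<in> \<omega> (n-1)" using pm(2) rE rv pmE unfolding maxedge_def redges_def by auto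
      then show False using antis[OF n1 vV pm(1) rv a] b by blast
    qed
    have r1: "(e, r n) \<in> \<omega> n" "e \<noteq> r n" using k1 k1n unfolding p_def by auto
    obtain k2 where k2: "m < k2" "k2 \<le> n" "(r k2, q k2) \<in> \<omega> k2" "r k2 \<noteq> q k2"
      "\<forall>i. k2 < i \<and> i \<le> n \<longrightarrow> r i = q i" using r(3) unfolding lexless_def by blast
    have k2n: "k2 = n"
    proof (rule ccontr)
      assume "k2 \<noteq> n"
      then have k: "k2 = n - 1" using ii k2 by blast
      have "r n = e'" using k2(5) k mlt unfolding q_def by auto
      then have rv: "r (n-1) \<in> redges B (n-1) v'" using rE rlink unfolding redges_def v'_def by simp
      have a: "(r (n-1), qm) \<in> \<omega> (n-1)" and b: "qm \<noteq> r (n-1)" using k2(3,4) k nn unfolding q_def by auto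
      have "(qm, r (n-1)) \<in> \<omega> (n-1)" using qm(2) rE rv qmE unfolding minedge_def redges_def by auto
      then show False using antis[OF n1 v'V rv qm(1) a] b by blast
    qed
    have r2: "(r n, e') \<in> \<omega> n" "r n \<noteq> e'" using k2 k2n unfolding q_def by auto
    show False using nob r1 r2 by blast
  qed
  have cons: "consecutive B \<omega> m n u p q"
    unfolding consecutive_def using fp fq lex noR by blast
  have "fsrc B m q = \<sigma> (fsrc B m p)"
    using wt5[OF m1 mn uV cons] fsp fsq tv_in[OF vV] bv_in[OF v'V] by simp
  then show ?thesis using fsp fsq unfolding v_def v'_def by simp
qed

lemma factB:
  assumes n3: "3 \<le> n" and uV: "u \<in> VV" and e: "e \<in> redges B n u" and e': "e' \<in> redges B n u"
    and ee: "(e, e') \<in> \<omega> n"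
  shows "(h (bsrc B n e), h (bsrc B n e')) \<in> R\<^sup>*"
proof -
  have n1: "1 \<le> n" using n3 by simp
  have n2: "2 \<le> n" using n3 by simp
  let ?S = "redges B n u"
  let ?r = "\<omega> n \<inter> (?S \<times> ?S)"
  show ?thesis
  proof (rule lin_chain[OF lo[OF n1 uV] red_fin[OF n1], of "\<lambda>e. h (bsrc B n e)" R e e'])
    show "(e, e') \<in> ?r" using e e' ee by blast
  next
    fix x y assume xy: "(x, y) \<in> ?r" "x \<noteq> y" "\<not> (\<exists>z. (x,z)\<in>?r \<and> (z,y)\<in>?r \<and> z\<noteq>x \<and> z\<noteq>y)"
    have xS: "x \<in> ?S" and yS: "y \<in> ?S" using xy by auto
    have nx: "nextedge B \<omega> n x y"
      unfolding nextedge_def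
    proof (intro conjI)
      show "x \<in> bE B n" "y \<in> bE B n" "brng B n x = brng B n y" using xS yS unfolding redges_def by auto
      show "(x, y) \<in> \<omega> n" "x \<noteq> y" using xy by auto
      show "\<not> (\<exists>e''. (x, e'') \<in> \<omega> n \<and> (e'', y) \<in> \<omega> n \<and> e'' \<noteq> x \<and> e'' \<noteq> y)"
      proof
        assume "\<exists>e''. (x, e'') \<in> \<omega> n \<and> (e'', y) \<in> \<omega> n \<and> e'' \<noteq> x \<and> e'' \<noteq> y"
        then obtain z where z: "(x, z) \<in> \<omega> n" "(z, y) \<in> \<omega> n" "z \<noteq> x" "z \<noteq> y" by blast
        have "z \<in> ?S" using om_sub[OF n1 z(1)] xS unfolding redges_def by auto
        then show False using xy(3) z xS yS by blast
      qed
    qed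
    have xu: "brng B n x = u" using xS unfolding redges_def by auto
    have "\<sigma> (tv (bsrc B n x)) = bv (bsrc B n y)" by (rule factA[OF n3 uV nx xu])
    moreover have "bsrc B n x \<in> VV" "bsrc B n y \<in> VV"
      using src_VV[OF n2] xS yS unfolding redges_def by auto
    ultimately show "(h (bsrc B n x), h (bsrc B n y)) \<in> R\<^sup>*" using edgeE by blast
  qed
qed

lemma factC:
  assumes n3: "3 \<le> n" and uV: "u \<in> VV" and e: "e \<in> redges B n u"
  shows "(h (bsrc B n e), h (tv u)) \<in> R\<^sup>*" "(h (bv u), h (bsrc B n e)) \<in> R\<^sup>*"
proof -
  have n1: "1 \<le> n" using n3 by simp
  have n2: "2 \<le> n" using n3 by simp
  obtain a where a: "a \<in> redges B n u" "maxedge B \<omega> n a" using max_ex[OF n1 uV] by blast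
  have "(e, a) \<in> \<omega> n" using a e unfolding maxedge_def redges_def by auto
  then have "(h (bsrc B n e), h (bsrc B n a)) \<in> R\<^sup>*" using factB[OF n3 uV e a(1)] by blast
  then show "(h (bsrc B n e), h (tv u)) \<in> R\<^sup>*" using tv_src[OF n2 uV a] by simp
  obtain b where b: "b \<in> redges B n u" "minedge B \<omega> n b" using min_ex[OF n1 uV] by blast
  have "(b, e) \<in> \<omega> n" using b e unfolding minedge_def redges_def by auto
  then have "(h (bsrc B n b), h (bsrc B n e)) \<in> R\<^sup>*" using factB[OF n3 uV b(1) e] by blast
  then show "(h (bv u), h (bsrc B n e)) \<in> R\<^sup>*" using bv_src[OF n2 uV b] by simp
qed

lemma fwd:
  assumes m2: "2 \<le> m" and fp: "fpath B m M u p" and fs: "fsrc B m p = w"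
  shows "(h w, h (tv u)) \<in> R\<^sup>*" "(h (bv u), h w) \<in> R\<^sup>*"
proof -
  have mM: "m < M" using fp unfolding fpath_def by blast
  have pE: "\<And>i. m < i \<Longrightarrow> i \<le> M \<Longrightarrow> p i \<in> bE B i" using fp unfolding fpath_def by blast
  have pl: "\<And>i. m < i \<Longrightarrow> i < M \<Longrightarrow> brng B i (p i) = bsrc B (Suc i) (p (Suc i))"
    using fp unfolding fpath_def by blast
  have pu: "brng B M (p M) = u" using fp unfolding fpath_def by blast
  have xV: "\<And>i. m < i \<Longrightarrow> i \<le> M \<Longrightarrow> brng B i (p i) \<in> VV"
    using pE rng_VV by simp
  have pr: "\<And>i. m < i \<Longrightarrow> i \<le> M \<Longrightarrow> p i \<in> redges B i (brng B i (p i))"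
    using pE unfolding redges_def by simp
  have main: "\<forall>d. Suc m + d \<le> M \<longrightarrow>
     (h w, h (tv (brng B (Suc m + d) (p (Suc m + d))))) \<in> R\<^sup>* \<and>
     (h (bv (brng B (Suc m + d) (p (Suc m + d)))), h w) \<in> R\<^sup>*"
  proof (intro allI)
    fix d show "Suc m + d \<le> M \<longrightarrow>
     (h w, h (tv (brng B (Suc m + d) (p (Suc m + d))))) \<in> R\<^sup>* \<and>
     (h (bv (brng B (Suc m + d) (p (Suc m + d)))), h w) \<in> R\<^sup>*"
    proof (induction d)
      case 0
      show ?case
      proof
        assume a: "Suc m + 0 \<le> M"
        have s: "bsrc B (Suc m) (p (Suc m)) = w" using fs unfolding fsrc_def by simp
        have "3 \<le> Suc m" using m2 by simp
        from factC[OF this xV[of "Suc m"] pr[of "Suc m"]] a s show "(h w, h (tv (brng B (Suc m + 0) (p (Suc m + 0))))) \<in> R\<^sup>* \<and>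
          (h (bv (brng B (Suc m + 0) (p (Suc m + 0)))), h w) \<in> R\<^sup>*" by simp
      qed
    next
      case (Suc d)
      show ?case
      proof
        assume a: "Suc m + Suc d \<le> M"
        define j where "j = Suc m + d"
        have jj: "Suc m + Suc d = Suc j" unfolding j_def by simp
        have IH: "(h w, h (tv (brng B j (p j)))) \<in> R\<^sup>*" "(h (bv (brng B j (p j))), h w) \<in> R\<^sup>*"
          using Suc a unfolding j_def by auto
        have j1: "m < j" "j < M" "m < Suc j" "Suc j \<le> M" using a unfolding j_def by auto
        have x: "brng B j (p j) \<in> VV" using xV j1 by simp
        have x': "brng B (Suc j) (p (Suc j)) \<in> VV" using xV j1 by simp
        have s: "bsrc B (Suc j) (p (Suc j)) = brng B j (p j)" using pl j1 by simp
        have "3 \<le> Suc j" using m2 j1 by simp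
        note C = factC[OF this x' pr[OF j1(3,4)], unfolded s]
        have "(h (tv (brng B j (p j))), h (tv (brng B (Suc j) (p (Suc j))))) \<in> R\<^sup>*"
          by (rule transT[OF C(1) tv_in[OF x'] x])
        moreover have "(h (bv (brng B (Suc j) (p (Suc j)))), h (bv (brng B j (p j)))) \<in> R\<^sup>*"
          by (rule transT'[OF C(2) bv_in[OF x'] x])
        ultimately show "(h w, h (tv (brng B (Suc m + Suc d) (p (Suc m + Suc d))))) \<in> R\<^sup>* \<and>
          (h (bv (brng B (Suc m + Suc d) (p (Suc m + Suc d)))), h w) \<in> R\<^sup>*"
          using IH unfolding jj by auto
      qed
    qed
  qed
  have "Suc m + (M - Suc m) = M" using mM by simp
  then show "(h w, h (tv u)) \<in> R\<^sup>*" "(h (bv u), h w) \<in> R\<^sup>*"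
    using main[rule_format, of "M - Suc m"] pu by auto
qed

lemma wt1: "1 \<le> n \<Longrightarrow> v \<in> bV B n \<Longrightarrow> card (redges B n v) \<ge> 2"
proof -
  assume a: "1 \<le> n" "v \<in> bV B n"
  have "\<forall>n\<ge>1. \<forall>v\<in>bV B n. card (redges B n v) \<ge> 2"
    using wt unfolding well_telescoped_def by (elim conjE)
  then show ?thesis using a by blast
qed

lemma part1:
  assumes sB: "simple B"
  shows "strongly_connected H R"
proof -
  obtain M where M: "M > 3" "\<forall>v\<in>bV B 3. \<forall>w\<in>bV B M. \<exists>p. fpath B 3 M w p \<and> fsrc B 3 p = v"
    using sB[unfolded simple_def, THEN spec[of _ 3]] by blast
  have L3: "bV B 3 = VV" and LM: "bV B M = VV" using lev M(1) by auto
  have "bV B 1 \<noteq> {}" using br unfolding bratteli_def by blast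
  then obtain u' where u': "u' \<in> VV" using lev[of 1] by auto
  have n1: "1 \<le> Suc M" and n3: "3 \<le> Suc M" using M(1) by auto
  let ?S = "redges B (Suc M) u'"
  let ?r = "\<omega> (Suc M) \<inter> (?S \<times> ?S)"
  have LO: "linear_order_on ?S ?r" by (rule lo[OF n1 u'])
  have fS: "finite ?S" by (rule red_fin[OF n1])
  have c2: "card ?S \<ge> 2" using wt1[OF n1] lev[OF n1] u' by simp
  obtain emin where em: "emin \<in> ?S" "minedge B \<omega> (Suc M) emin" using min_ex[OF n1 u'] by blast
  have "\<exists>e2\<in>?S. e2 \<noteq> emin"
  proof (rule ccontr)
    assume "\<not> (\<exists>e2\<in>?S. e2 \<noteq> emin)"
    then have "?S \<subseteq> {emin}" by blast
    then have "card ?S \<le> 1" using card_mono[of "{emin}" ?S] by simp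
    then show False using c2 by simp
  qed
  then obtain e2 where e2: "e2 \<in> ?S" "e2 \<noteq> emin" by blast
  have ee2: "(emin, e2) \<in> ?r" using em e2 unfolding minedge_def redges_def by auto
  have ne2: "emin \<noteq> e2" using e2 by simp
  obtain c where c: "(emin, c) \<in> ?r" "c \<noteq> emin"
    and nb: "\<not> (\<exists>z. (emin,z)\<in>?r \<and> (z,c)\<in>?r \<and> z\<noteq>emin \<and> z\<noteq>c)"
    using lin_next[OF LO fS ee2 ne2] by blast
  have cS: "c \<in> ?S" using c by blast
  have nx: "nextedge B \<omega> (Suc M) emin c"
    unfolding nextedge_def
  proof (intro conjI)
    show "emin \<in> bE B (Suc M)" "c \<in> bE B (Suc M)" "brng B (Suc M) emin = brng B (Suc M) c"
      using em cS unfolding redges_def by auto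
    show "(emin, c) \<in> \<omega> (Suc M)" "emin \<noteq> c" using c by auto
    show "\<not> (\<exists>e''. (emin, e'') \<in> \<omega> (Suc M) \<and> (e'', c) \<in> \<omega> (Suc M) \<and> e'' \<noteq> emin \<and> e'' \<noteq> c)"
    proof
      assume "\<exists>e''. (emin, e'') \<in> \<omega> (Suc M) \<and> (e'', c) \<in> \<omega> (Suc M) \<and> e'' \<noteq> emin \<and> e'' \<noteq> c"
      then obtain z where z: "(emin, z) \<in> \<omega> (Suc M)" "(z, c) \<in> \<omega> (Suc M)" "z \<noteq> emin" "z \<noteq> c" by blast
      have "z \<in> ?S" using om_sub[OF n1 z(1)] em unfolding redges_def by auto
      then show False using nb z em cS by blast
    qed
  qed
  have eu: "brng B (Suc M) emin = u'" using em unfolding redges_def by simp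
  define u1 where "u1 = bsrc B (Suc M) emin"
  define u2 where "u2 = bsrc B (Suc M) c"
  have sig: "\<sigma> (tv u1) = bv u2" unfolding u1_def u2_def by (rule factA[OF n3 u' nx eu])
  have u1V: "u1 \<in> VV" and u2V: "u2 \<in> VV"
    using src_VV[of "Suc M"] em cS M(1) unfolding u1_def u2_def redges_def by auto
  have t1: "tv u1 \<in> VV" "tv (tv u1) = tv u1" using Vtil_fix[OF tv_in[OF u1V]] by auto
  have b2: "bv u2 \<in> VV" "bv (bv u2) = bv u2" using Vbar_fix[OF bv_in[OF u2V]] by auto
  have mid: "(h (tv u1), h (bv u2)) \<in> R" using edgeE[OF t1(1) b2(1)] t1(2) b2(2) sig by simp
  show ?thesis
    unfolding strongly_connected_def
  proof (intro ballI)
    fix z z' assume z: "z \<in> H" and z': "z' \<in> H"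
    obtain w where w: "w \<in> VV" "z = h w" using H_h[OF z] by blast
    obtain w' where w': "w' \<in> VV" "z' = h w'" using H_h[OF z'] by blast
    obtain p1 where p1: "fpath B 3 M u1 p1" "fsrc B 3 p1 = w" using M(2) L3 LM w u1V by blast
    obtain p2 where p2: "fpath B 3 M u2 p2" "fsrc B 3 p2 = w'" using M(2) L3 LM w' u2V by blast
    have "(h w, h (tv u1)) \<in> R\<^sup>*" using fwd(1)[OF _ p1] by simp
    moreover have "(h (bv u2), h w') \<in> R\<^sup>*" using fwd(2)[OF _ p2] by simp
    ultimately show "(z, z') \<in> R\<^sup>*" using mid w w' by (simp add: rtrancl_trans)
  qed
qed

lemma part2:
  assumes cA: "classA B"
  shows "weakly_connected H R"
proof -
  obtain k c d lab where c1: "1 \<le> c" and A: "\<forall>n\<ge>1.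
        (\<forall>v\<in>bV B n. lab n v \<in> {1..Suc k}) \<and>
        (\<forall>i\<in>{1..k}. card {v\<in>bV B n. lab n v = i} = d i) \<and>
        card {v\<in>bV B n. lab n v = Suc k} = c \<and>
        (\<forall>w\<in>bV B n. \<forall>v\<in>bV B (Suc n).
           (lab (Suc n) v = Suc k \<longrightarrow> nedges B n w v > 0) \<and>
           (lab (Suc n) v \<noteq> Suc k \<longrightarrow> (nedges B n w v > 0 \<longleftrightarrow> lab n w = lab (Suc n) v)))"
    using cA unfolding classA_def by blast
  have o2: "1 \<le> (2::nat)" and o3: "1 \<le> Suc (2::nat)" by simp_all
  note A2' = mp[OF spec[OF A, of 2] o2]
  note A3' = mp[OF spec[OF A, of "Suc 2"] o3]
  have A3: "card {v\<in>bV B (Suc 2). lab (Suc 2) v = Suc k} = c" using A3' by blast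
  have A2: "\<forall>w\<in>bV B 2. \<forall>v\<in>bV B (Suc 2). lab (Suc 2) v = Suc k \<longrightarrow> nedges B 2 w v > 0"
    using A2' by blast
  have "{v\<in>bV B (Suc 2). lab (Suc 2) v = Suc k} \<noteq> {}" using A3 c1 by (metis card.empty not_one_le_zero)
  then obtain v where v: "v \<in> bV B (Suc 2)" "lab (Suc 2) v = Suc k" by blast
  have vV: "v \<in> VV" using v lev[of "Suc 2"] by simp
  have L2: "bV B 2 = VV" using lev by simp
  have ed: "\<exists>e\<in>redges B (Suc 2) v. bsrc B (Suc 2) e = w" if w: "w \<in> VV" for w
  proof -
    have "nedges B 2 w v > 0" using A2 v w L2 by blast
    then have "{e \<in> bE B (Suc 2). bsrc B (Suc 2) e = w \<and> brng B (Suc 2) e = v} \<noteq> {}"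
      unfolding nedges_def by (metis card.empty less_irrefl)
    then show ?thesis unfolding redges_def by blast
  qed
  have n1: "1 \<le> Suc 2" and n3: "3 \<le> Suc (2::nat)" by auto
  show ?thesis
    unfolding weakly_connected_def
  proof (intro ballI)
    fix z z' assume z: "z \<in> H" and z': "z' \<in> H"
    obtain w where w: "w \<in> VV" "z = h w" using H_h[OF z] by blast
    obtain w' where w': "w' \<in> VV" "z' = h w'" using H_h[OF z'] by blast
    obtain e where e: "e \<in> redges B (Suc 2) v" "bsrc B (Suc 2) e = w" using ed[OF w(1)] by blast
    obtain e' where e': "e' \<in> redges B (Suc 2) v" "bsrc B (Suc 2) e' = w'" using ed[OF w'(1)] by blast
    have "e = e' \<or> (e, e') \<in> \<omega> (Suc 2) \<or> (e', e) \<in> \<omega> (Suc 2)"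
      using lo_facts(5)[OF lo[OF n1 vV] e(1) e'(1)] by blast
    then show "(z, z') \<in> R\<^sup>* \<or> (z', z) \<in> R\<^sup>*"
    proof (elim disjE)
      assume "e = e'" then show ?thesis using e e' w w' by simp
    next
      assume "(e, e') \<in> \<omega> (Suc 2)"
      then show ?thesis using factB[OF n3 vV e(1) e'(1)] e e' w w' by simp
    next
      assume "(e', e) \<in> \<omega> (Suc 2)"
      then show ?thesis using factB[OF n3 vV e'(1) e(1)] e e' w w' by simp
    qed
  qed
qed

end
theorem mainTheorem8:
  fixes B :: "('v, 'e) bdiag"
    and \<omega> :: "nat \<Rightarrow> ('e \<times> 'e) set"
    and \<phi> :: "(nat \<Rightarrow> 'e) \<Rightarrow> (nat \<Rightarrow> 'e)"
    and VV :: "'v set"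
    and tv bv \<sigma> :: "'v \<Rightarrow> 'v"
  assumes "bratteli B"
    and "aperiodic B"
    and "finite VV"
    and "bordering B \<omega>"
    and "vershik_map B \<omega> \<phi>"
    and "assoc_sigma B \<omega> \<phi> \<sigma>"
    and "well_telescoped B \<omega> VV tv bv \<sigma>"
  shows "(simple B \<longrightarrow>
            strongly_connected (Hverts VV (Vtil B \<omega>) (Vbar B \<omega>) tv bv)
              (Hedges (Hverts VV (Vtil B \<omega>) (Vbar B \<omega>) tv bv) \<sigma>)) \<and>
         (classA B \<longrightarrow>
            weakly_connected (Hverts VV (Vtil B \<omega>) (Vbar B \<omega>) tv bv)
              (Hedges (Hverts VV (Vtil B \<omega>) (Vbar B \<omega>) tv bv) \<sigma>))"
  proof -
  interpret WT B \<omega> VV tv bv \<sigma> using assms(1,4,7) by unfold_locales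
  show ?thesis using part1 part2 unfolding H_def R_def by blast
qed

end
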